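(* Let $k\ge1$, $GP=GP(3k,k)$, and let $\gamma:E(GP)\to\{1,2,3\}$ be a proper edge colouring. Let $(a,b,c)$ be a permutation of $(1,2,3)$ such that $\gamma_1$ is a vertex of $T_\pm$ or of $H_\pm$. Then $$\operatorname{sign}(\gamma)=\prod_{i=1}^k \operatorname{sign}(\gamma_i,\gamma_{i+1}).$$
   Context: $GP(3k,k)$ has vertex set $\{u_i,v_i : i\in\mathbb{Z}_{3k}\}$ and edges $u_iu_{i+1}$, $u_iv_i$, $v_iv_{i+k}$ for $i\in\mathbb{Z}_{3k}$ (indices modulo $3k$). For $i=1,\dots,k+1$ let $\gamma_i=(\gamma(u_iu_{i+1}),\gamma(u_{k+i}u_{k+i+1}),\gamma(u_{2k+i}u_{2k+i+1}))$, written as a string $xyz$. Vertex signs: $\operatorname{sign}_\gamma(u_i)=+$ if $(\gamma(u_{i-1}u_i),\gamma(u_iu_{i+1}),\gamma(u_iv_i))\in\{123,231,312\}$ and $-$ otherwise; $\operatorname{sign}_\gamma(v_i)=+$ if $(\gamma(v_{k+i}v_i),\gamma(v_iv_{2k+i}),\gamma(v_iu_i))\in\{123,231,312\}$ and $-$ otherwise. Then $\operatorname{sign}(\gamma)=\prod_{w\in V(GP)}\operatorname{sign}_\gamma(w)$ (with $+,-$ multiplied as $\pm1$). Given the permutation $(a,b,c)$: $T_\pm$ is the directed graph on vertices $abc,bca,cab$ having both arcs between each pair, with signs $\operatorname{sign}(abc,cab)=\operatorname{sign}(cab,bca)=\operatorname{sign}(bca,abc)=+$ and the three reverse arcs negative.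 $H_\pm$ is the directed graph on the $6$-cycle $aba-bcc-aab-cbc-baa-ccb-aba$ with both arcs for each edge, where the arcs $aba\to bcc$, $bcc\to aab$, $aab\to cbc$, $cbc\to baa$, $baa\to ccb$, $ccb\to aba$ have sign $+$ and their reverses have sign $-$. $\operatorname{sign}(x,y)$ denotes the sign of the arc from $x$ to $y$. *)

theory Defs
  imports Main
begin

text \<open>Vertices of GP(3k,k): U i = u_i, V i = v_i, with indices taken in {0..<3k}
  (i.e. modulo 3k).\<close>
datatype gpv = U nat | V nat

definition gp_edges :: "nat \<Rightarrow> gpv set set" where
  "gp_edges k = (\<Union>i<3*k. {{U i, U ((i+1) mod (3*k))}, {U i, V i},
                            {V i, V ((i+k) mod (3*k))}})"

definition proper_colouring :: "nat \<Rightarrow> (gpv set \<Rightarrow> nat) \<Rightarrow> bool" where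
  "proper_colouring k \<gamma> \<longleftrightarrow>
     (\<forall>e\<in>gp_edges k. \<gamma> e \<in> {1,2,3}) \<and>
     (\<forall>e\<in>gp_edges k. \<forall>f\<in>gp_edges k. e \<noteq> f \<and> e \<inter> f \<noteq> {} \<longrightarrow> \<gamma> e \<noteq> \<gamma> f)"

definition gam :: "nat \<Rightarrow> (gpv set \<Rightarrow> nat) \<Rightarrow> nat \<Rightarrow> nat \<times> nat \<times> nat" where
  "gam k \<gamma> i =
     (\<gamma> {U (i mod (3*k)), U ((i+1) mod (3*k))},
      \<gamma> {U ((k+i) mod (3*k)), U ((k+i+1) mod (3*k))},
      \<gamma> {U ((2*k+i) mod (3*k)), U ((2*k+i+1) mod (3*k))})"

definition pos_triple :: "nat \<times> nat \<times> nat \<Rightarrow> bool" where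
  "pos_triple t \<longleftrightarrow> t \<in> {(1,2,3), (2,3,1), (3,1,2)}"

definition pm :: "bool \<Rightarrow> int" where
  "pm b = (if b then 1 else -1)"

definition sign_u :: "nat \<Rightarrow> (gpv set \<Rightarrow> nat) \<Rightarrow> nat \<Rightarrow> int" where
  "sign_u k \<gamma> i = pm (pos_triple
     (\<gamma> {U ((i + 3*k - 1) mod (3*k)), U i}, \<gamma> {U i, U ((i+1) mod (3*k))}, \<gamma> {U i, V i}))"

definition sign_v :: "nat \<Rightarrow> (gpv set \<Rightarrow> nat) \<Rightarrow> nat \<Rightarrow> int" where
  "sign_v k \<gamma> i = pm (pos_triple
     (\<gamma> {V ((k+i) mod (3*k)), V i}, \<gamma> {V i, V ((2*k+i) mod (3*k))}, \<gamma> {V i, U i}))"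

definition gp_sign :: "nat \<Rightarrow> (gpv set \<Rightarrow> nat) \<Rightarrow> int" where
  "gp_sign k \<gamma> = (\<Prod>i<3*k. sign_u k \<gamma> i * sign_v k \<gamma> i)"

definition T_verts :: "nat \<Rightarrow> nat \<Rightarrow> nat \<Rightarrow> (nat \<times> nat \<times> nat) set" where
  "T_verts a b c = {(a,b,c), (b,c,a), (c,a,b)}"

definition H_verts :: "nat \<Rightarrow> nat \<Rightarrow> nat \<Rightarrow> (nat \<times> nat \<times> nat) set" where
  "H_verts a b c = {(a,b,a), (b,c,c), (a,a,b), (c,b,c), (b,a,a), (c,c,b)}"

text \<open>Positive arcs of T_\<pm> and H_\<pm>; negative arcs are their reverses.\<close>
definition pos_arcs :: "nat \<Rightarrow> nat \<Rightarrow> nat \<Rightarrow> ((nat \<times> nat \<times> nat) \<times> (nat \<times> nat \<times> nat)) set" where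
  "pos_arcs a b c =
     {((a,b,c),(c,a,b)), ((c,a,b),(b,c,a)), ((b,c,a),(a,b,c)),
      ((a,b,a),(b,c,c)), ((b,c,c),(a,a,b)), ((a,a,b),(c,b,c)),
      ((c,b,c),(b,a,a)), ((b,a,a),(c,c,b)), ((c,c,b),(a,b,a))}"

definition arc_sign :: "nat \<Rightarrow> nat \<Rightarrow> nat \<Rightarrow> nat \<times> nat \<times> nat \<Rightarrow> nat \<times> nat \<times> nat \<Rightarrow> int" where
  "arc_sign a b c x y =
     (if (x,y) \<in> pos_arcs a b c then 1
      else if (y,x) \<in> pos_arcs a b c then -1 else 0)"

end

theory Submission
  imports Defs
begin


definition chk :: "nat \<Rightarrow> nat \<Rightarrow> nat \<Rightarrow> nat \<Rightarrow> nat \<Rightarrow> nat \<Rightarrow> nat \<times> nat \<times> nat \<Rightarrow> bool" where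
 "chk a b c P Q R x = (case x of (x1,x2,x3) \<Rightarrow>
   (let s1 = 6-P-R; s2=6-Q-P; s3=6-R-Q; y1=6-x1-s1; y2=6-x2-s2; y3=6-x3-s3 in
    (x1\<noteq>s1 \<and> x2\<noteq>s2 \<and> x3\<noteq>s3) \<longrightarrow>
     (pm (pos_triple (x1,y1,s1)) * pm (pos_triple (P,R,s1)) *
         (pm (pos_triple (x2,y2,s2)) * pm (pos_triple (Q,P,s2))) *
         (pm (pos_triple (x3,y3,s3)) * pm (pos_triple (R,Q,s3)))
       = arc_sign a b c (x1,x2,x3) (y1,y2,y3) \<and> (y1,y2,y3) \<in> T_verts a b c \<union> H_verts a b c)))"

definition perms :: "(nat \<times> nat \<times> nat) list" where
  "perms = [(1,2,3),(1,3,2),(2,1,3),(2,3,1),(3,1,2),(3,2,1)]"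

lemma TH_list: "T_verts a b c \<union> H_verts a b c = set [(a,b,c), (b,c,a), (c,a,b),(a,b,a), (b,c,c), (a,a,b), (c,b,c), (b,a,a), (c,c,b)]"
  by (auto simp: T_verts_def H_verts_def)

lemma chk_all: "\<forall>(a,b,c)\<in>set perms. \<forall>(P,Q,R)\<in>set perms. \<forall>x\<in>set [(a,b,c), (b,c,a), (c,a,b),(a,b,a), (b,c,c), (a,a,b), (c,b,c), (b,a,a), (c,c,b)]. chk a b c P Q R x"
  unfolding perms_def chk_def arc_sign_def pos_arcs_def pos_triple_def pm_def T_verts_def H_verts_def
  by code_simp


lemma third: fixes u v w :: nat assumes "u \<in> {1,2,3}" "v \<in> {1,2,3}" "w \<in> {1,2,3}" "distinct [u,v,w]"
  shows "w = 6 - u - v"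
  using assms by auto

lemma core:
  fixes a b c x1 x2 x3 y1 y2 y3 s1 s2 s3 P Q R :: nat
  assumes abc: "(a,b,c) \<in> set perms"
    and x: "(x1,x2,x3) \<in> T_verts a b c \<union> H_verts a b c"
    and r: "y1 \<in> {1,2,3}" "y2 \<in> {1,2,3}" "y3 \<in> {1,2,3}" "s1 \<in> {1,2,3}" "s2 \<in> {1,2,3}" "s3 \<in> {1,2,3}"
      "P \<in> {1,2,3}" "Q \<in> {1,2,3}" "R \<in> {1,2,3}"
    and d: "distinct [x1,y1,s1]" "distinct [x2,y2,s2]" "distinct [x3,y3,s3]"
      "distinct [P,R,s1]" "distinct [Q,P,s2]" "distinct [R,Q,s3]"
  shows "pm (pos_triple (x1,y1,s1)) * pm (pos_triple (P,R,s1)) *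
         (pm (pos_triple (x2,y2,s2)) * pm (pos_triple (Q,P,s2))) *
         (pm (pos_triple (x3,y3,s3)) * pm (pos_triple (R,Q,s3)))
       = arc_sign a b c (x1,x2,x3) (y1,y2,y3) \<and> (y1,y2,y3) \<in> T_verts a b c \<union> H_verts a b c"
proof -
  have xr: "x1 \<in> {1,2,3}" "x2 \<in> {1,2,3}" "x3 \<in> {1,2,3}"
    using x abc by (auto simp: T_verts_def H_verts_def perms_def)
  have PQR: "(P,Q,R) \<in> set perms"
    using r(7-9) d(4-6) by (auto simp: perms_def)
  have e: "s1 = 6 - P - R" "s2 = 6 - Q - P" "s3 = 6 - R - Q"
    using third[of P R s1] third[of Q P s2] third[of R Q s3] r(4-9) d(4-6) by simp_all
  have f: "y1 = 6 - x1 - s1" "y2 = 6 - x2 - s2" "y3 = 6 - x3 - s3"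
    using third[of x1 s1 y1] third[of x2 s2 y2] third[of x3 s3 y3] r(1-6) d(1-3) xr by simp_all
  have d2: "x1 \<noteq> s1" "x2 \<noteq> s2" "x3 \<noteq> s3" using d by auto
  have "chk a b c P Q R (x1,x2,x3)"
    using bspec[OF bspec[OF chk_all abc, unfolded prod.case] PQR, unfolded prod.case] x
    unfolding TH_list by blast
  then have "(x1\<noteq>6-P-R \<and> x2\<noteq>6-Q-P \<and> x3\<noteq>6-R-Q) \<longrightarrow>
     (pm (pos_triple (x1,6-x1-(6-P-R),6-P-R)) * pm (pos_triple (P,R,6-P-R)) *
         (pm (pos_triple (x2,6-x2-(6-Q-P),6-Q-P)) * pm (pos_triple (Q,P,6-Q-P))) *
         (pm (pos_triple (x3,6-x3-(6-R-Q),6-R-Q)) * pm (pos_triple (R,Q,6-R-Q)))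
       = arc_sign a b c (x1,x2,x3) (6-x1-(6-P-R),6-x2-(6-Q-P),6-x3-(6-R-Q)) \<and>
        (6-x1-(6-P-R),6-x2-(6-Q-P),6-x3-(6-R-Q)) \<in> T_verts a b c \<union> H_verts a b c)"
    unfolding chk_def Let_def prod.case .
  then show ?thesis
    using d2 unfolding f e by blast
qed

lemma mod_prev: "(n::nat) \<ge> 1 \<Longrightarrow> j \<ge> 1 \<Longrightarrow> (j mod n + n - 1) mod n = (j - 1) mod n"
proof -
  assume a: "n \<ge> 1" "j \<ge> 1"
  have "j mod n + n - 1 = j mod n + (n - 1)" using a by simp
  hence "(j mod n + n - 1) mod n = (j + (n-1)) mod n" by (simp add: mod_add_left_eq)
  also have "j + (n-1) = (j - 1) + n" using a by simp
  finally show ?thesis by simp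
qed

lemma mod_ne: assumes "0 < d" "d < (n::nat)" shows "(j + d) mod n \<noteq> j mod n"
proof
  assume h: "(j + d) mod n = j mod n"
  define r where "r = j mod n"
  have rn: "r < n" using assms unfolding r_def by simp
  have "(r + d) mod n = r" using h unfolding r_def by (simp add: mod_add_left_eq)
  moreover have "(r + d) mod n = (if r + d < n then r + d else r + d - n)"
    using rn assms by (simp add: mod_if le_mod_geq)
  ultimately show False using assms rn by (auto split: if_splits)
qed

lemma eU: "i < 3*k \<Longrightarrow> {U i, U ((i+1) mod (3*k))} \<in> gp_edges k"
  by (auto simp: gp_edges_def)
lemma eS: "i < 3*k \<Longrightarrow> {U i, V i} \<in> gp_edges k"
  by (auto simp: gp_edges_def)
lemma eV: "i < 3*k \<Longrightarrow> {V i, V ((i+k) mod (3*k))} \<in> gp_edges k"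
  by (auto simp: gp_edges_def)

lemma prop_rng: "proper_colouring k \<gamma> \<Longrightarrow> e \<in> gp_edges k \<Longrightarrow> \<gamma> e \<in> {1,2,3}"
  unfolding proper_colouring_def by blast

lemma tri: assumes "proper_colouring k \<gamma>" "e1 \<in> gp_edges k" "e2 \<in> gp_edges k" "e3 \<in> gp_edges k"
  "e1 \<noteq> e2" "e1 \<noteq> e3" "e2 \<noteq> e3" "w \<in> e1" "w \<in> e2" "w \<in> e3"
  shows "distinct [\<gamma> e1, \<gamma> e2, \<gamma> e3]"
proof -
  have "\<And>e f. e \<in> gp_edges k \<Longrightarrow> f \<in> gp_edges k \<Longrightarrow> e \<noteq> f \<Longrightarrow> w \<in> e \<Longrightarrow> w \<in> f \<Longrightarrow> \<gamma> e \<noteq> \<gamma> f"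
    using assms(1) unfolding proper_colouring_def by blast
  then show ?thesis using assms by auto
qed

lemma slice:
  assumes k: "k \<ge> 1" and pc: "proper_colouring k \<gamma>" and abc: "(a,b,c) \<in> set perms" and j: "j \<ge> 1"
    and h: "gam k \<gamma> (j-1) \<in> T_verts a b c \<union> H_verts a b c"
  shows "sign_u k \<gamma> (j mod (3*k)) * sign_v k \<gamma> (j mod (3*k)) *
         (sign_u k \<gamma> ((j+k) mod (3*k)) * sign_v k \<gamma> ((j+k) mod (3*k))) *
         (sign_u k \<gamma> ((j+2*k) mod (3*k)) * sign_v k \<gamma> ((j+2*k) mod (3*k)))
       = arc_sign a b c (gam k \<gamma> (j-1)) (gam k \<gamma> j) \<and> gam k \<gamma> j \<in> T_verts a b c \<union> H_verts a b c"
proof -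
  define m0 where "m0 = j mod (3*k)"
  define m1 where "m1 = (j+k) mod (3*k)"
  define m2 where "m2 = (j+2*k) mod (3*k)"
  define l0 where "l0 = (j-1) mod (3*k)"
  define l1 where "l1 = (j+k-1) mod (3*k)"
  define l2 where "l2 = (j+2*k-1) mod (3*k)"
  define o0 where "o0 = (j+1) mod (3*k)"
  define o1 where "o1 = (j+k+1) mod (3*k)"
  define o2 where "o2 = (j+2*k+1) mod (3*k)"
  have n: "3*k > 0" using k by simp
  have lt: "m0 < 3*k" "m1 < 3*k" "m2 < 3*k" "l0 < 3*k" "l1 < 3*k" "l2 < 3*k"
    unfolding m0_def m1_def m2_def l0_def l1_def l2_def using n by auto
  have lm: "(l0+1) mod (3*k) = m0" "(l1+1) mod (3*k) = m1" "(l2+1) mod (3*k) = m2"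
  proof -
    have "j - 1 + 1 = j" "j+k-1+1 = j+k" "j+2*k-1+1 = j+2*k" using j by simp_all
    then show "(l0+1) mod (3*k) = m0" "(l1+1) mod (3*k) = m1" "(l2+1) mod (3*k) = m2"
      unfolding m0_def m1_def m2_def l0_def l1_def l2_def
      by (simp_all only: mod_add_left_eq)
  qed
  have mo: "(m0+1) mod (3*k) = o0" "(m1+1) mod (3*k) = o1" "(m2+1) mod (3*k) = o2"
    unfolding m0_def m1_def m2_def o0_def o1_def o2_def
    by (simp_all only: mod_add_left_eq)
  have ml: "(m0 + 3*k - 1) mod (3*k) = l0" "(m1 + 3*k - 1) mod (3*k) = l1" "(m2 + 3*k - 1) mod (3*k) = l2"
    unfolding m0_def m1_def m2_def l0_def l1_def l2_def using j k mod_prev[of "3*k"]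
    by auto
  have vk: "(k+m0) mod (3*k) = m1" "(2*k+m0) mod (3*k) = m2"
     "(k+m1) mod (3*k) = m2" "(2*k+m1) mod (3*k) = m0"
     "(k+m2) mod (3*k) = m0" "(2*k+m2) mod (3*k) = m1"
     "(m0+k) mod (3*k) = m1" "(m1+k) mod (3*k) = m2" "(m2+k) mod (3*k) = m0"
  proof -
    have e: "k + j = j + k" "2*k + j = j + 2*k" "k + (j+k) = j + 2*k" "2*k + (j+k) = j + 3*k"
      "k + (j+2*k) = j + 3*k" "2*k + (j+2*k) = (j+k) + 3*k" "j+k+k = j+2*k" "j+2*k+k = j+3*k"
      by simp_all
    show "(k+m0) mod (3*k) = m1" "(2*k+m0) mod (3*k) = m2"
     "(k+m1) mod (3*k) = m2" "(2*k+m1) mod (3*k) = m0"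
     "(k+m2) mod (3*k) = m0" "(2*k+m2) mod (3*k) = m1"
     "(m0+k) mod (3*k) = m1" "(m1+k) mod (3*k) = m2" "(m2+k) mod (3*k) = m0"
      unfolding m0_def m1_def m2_def
      by (simp_all only: mod_add_right_eq mod_add_left_eq e mod_add_self2)
  qed
  have dm: "m0 \<noteq> m1" "m1 \<noteq> m2" "m0 \<noteq> m2"
  proof -
    have e: "j + k + k = j + 2*k" by simp
    have A: "(j+k) mod (3*k) \<noteq> j mod (3*k)" using mod_ne[of k "3*k" j] k by simp
    have B: "(j+2*k) mod (3*k) \<noteq> (j+k) mod (3*k)" using mod_ne[of k "3*k" "j+k"] k unfolding e by simp
    have C: "(j+2*k) mod (3*k) \<noteq> j mod (3*k)" using mod_ne[of "2*k" "3*k" j] k by simp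
    show "m0 \<noteq> m1" "m1 \<noteq> m2" "m0 \<noteq> m2" unfolding m0_def m1_def m2_def using A B C by auto
  qed
  have dlo: "l0 \<noteq> m0" "m0 \<noteq> o0" "l0 \<noteq> o0" "l1 \<noteq> m1" "m1 \<noteq> o1" "l1 \<noteq> o1"
     "l2 \<noteq> m2" "m2 \<noteq> o2" "l2 \<noteq> o2"
  proof -
    have "j - 1 + 1 = j" "j - 1 + 2 = j + 1" "j+k-1+1 = j+k" "j+k-1+2 = j+k+1"
      "j+2*k-1+1 = j+2*k" "j+2*k-1+2 = j+2*k+1" using j by simp_all
    moreover have "\<And>x. (x+1) mod (3*k) \<noteq> x mod (3*k)" "\<And>x. (x+2) mod (3*k) \<noteq> x mod (3*k)"
      using mod_ne[of 1 "3*k"] mod_ne[of 2 "3*k"] k by auto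
    ultimately show "l0 \<noteq> m0" "m0 \<noteq> o0" "l0 \<noteq> o0" "l1 \<noteq> m1" "m1 \<noteq> o1" "l1 \<noteq> o1"
     "l2 \<noteq> m2" "m2 \<noteq> o2" "l2 \<noteq> o2"
      unfolding m0_def m1_def m2_def l0_def l1_def l2_def o0_def o1_def o2_def
      by metis+
  qed
  have g0: "gam k \<gamma> (j-1) = (\<gamma> {U l0, U m0}, \<gamma> {U l1, U m1}, \<gamma> {U l2, U m2})"
  proof -
    have "j - 1 + 1 = j" "k + (j-1) = j+k-1" "k + (j-1) + 1 = j+k" "2*k + (j-1) = j+2*k-1"
      "2*k+(j-1)+1 = j+2*k" using j by simp_all
    then show ?thesis unfolding gam_def m0_def m1_def m2_def l0_def l1_def l2_def by simp
  qed
  have g1: "gam k \<gamma> j = (\<gamma> {U m0, U o0}, \<gamma> {U m1, U o1}, \<gamma> {U m2, U o2})"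
    unfolding gam_def m0_def m1_def m2_def o0_def o1_def o2_def by (simp add: ac_simps)
  have su: "sign_u k \<gamma> m0 = pm (pos_triple (\<gamma> {U l0, U m0}, \<gamma> {U m0, U o0}, \<gamma> {U m0, V m0}))"
     "sign_u k \<gamma> m1 = pm (pos_triple (\<gamma> {U l1, U m1}, \<gamma> {U m1, U o1}, \<gamma> {U m1, V m1}))"
     "sign_u k \<gamma> m2 = pm (pos_triple (\<gamma> {U l2, U m2}, \<gamma> {U m2, U o2}, \<gamma> {U m2, V m2}))"
    unfolding sign_u_def ml mo by simp_all
  have sv: "sign_v k \<gamma> m0 = pm (pos_triple (\<gamma> {V m0, V m1}, \<gamma> {V m2, V m0}, \<gamma> {U m0, V m0}))"
     "sign_v k \<gamma> m1 = pm (pos_triple (\<gamma> {V m1, V m2}, \<gamma> {V m0, V m1}, \<gamma> {U m1, V m1}))"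
     "sign_v k \<gamma> m2 = pm (pos_triple (\<gamma> {V m2, V m0}, \<gamma> {V m1, V m2}, \<gamma> {U m2, V m2}))"
    unfolding sign_v_def vk by (simp_all add: insert_commute)
  have EL: "{U l0, U m0} \<in> gp_edges k" "{U l1, U m1} \<in> gp_edges k" "{U l2, U m2} \<in> gp_edges k"
    using eU[of l0 k] eU[of l1 k] eU[of l2 k] lt lm by auto
  have ER: "{U m0, U o0} \<in> gp_edges k" "{U m1, U o1} \<in> gp_edges k" "{U m2, U o2} \<in> gp_edges k"
    using eU[of m0 k] eU[of m1 k] eU[of m2 k] lt mo by auto
  have ES: "{U m0, V m0} \<in> gp_edges k" "{U m1, V m1} \<in> gp_edges k" "{U m2, V m2} \<in> gp_edges k"
    using eS lt by auto
  have ET: "{V m0, V m1} \<in> gp_edges k" "{V m1, V m2} \<in> gp_edges k" "{V m2, V m0} \<in> gp_edges k"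
    using eV[of m0 k] eV[of m1 k] eV[of m2 k] lt vk by auto
  have du: "distinct [\<gamma> {U l0, U m0}, \<gamma> {U m0, U o0}, \<gamma> {U m0, V m0}]"
     "distinct [\<gamma> {U l1, U m1}, \<gamma> {U m1, U o1}, \<gamma> {U m1, V m1}]"
     "distinct [\<gamma> {U l2, U m2}, \<gamma> {U m2, U o2}, \<gamma> {U m2, V m2}]"
    using tri[OF pc EL(1) ER(1) ES(1), of "U m0"] tri[OF pc EL(2) ER(2) ES(2), of "U m1"]
      tri[OF pc EL(3) ER(3) ES(3), of "U m2"] dlo by (auto simp: doubleton_eq_iff)
  have dv: "distinct [\<gamma> {V m0, V m1}, \<gamma> {V m2, V m0}, \<gamma> {U m0, V m0}]"
     "distinct [\<gamma> {V m1, V m2}, \<gamma> {V m0, V m1}, \<gamma> {U m1, V m1}]"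
     "distinct [\<gamma> {V m2, V m0}, \<gamma> {V m1, V m2}, \<gamma> {U m2, V m2}]"
    using tri[OF pc ET(1) ET(3) ES(1), of "V m0"] tri[OF pc ET(2) ET(1) ES(2), of "V m1"]
      tri[OF pc ET(3) ET(2) ES(3), of "V m2"] dm by (auto simp: doubleton_eq_iff)
  have rng: "\<gamma> {U m0, U o0} \<in> {1,2,3}" "\<gamma> {U m1, U o1} \<in> {1,2,3}" "\<gamma> {U m2, U o2} \<in> {1,2,3}"
    "\<gamma> {U m0, V m0} \<in> {1,2,3}" "\<gamma> {U m1, V m1} \<in> {1,2,3}" "\<gamma> {U m2, V m2} \<in> {1,2,3}"
    "\<gamma> {V m0, V m1} \<in> {1,2,3}" "\<gamma> {V m1, V m2} \<in> {1,2,3}" "\<gamma> {V m2, V m0} \<in> {1,2,3}"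
    using prop_rng[OF pc] ER ES ET by auto
  show ?thesis
    unfolding m0_def[symmetric] m1_def[symmetric] m2_def[symmetric] g0 g1 su sv
    by (rule core[OF abc h[unfolded g0] rng du dv])
qed


lemma perms_of: assumes "distinct [a, b, c]" "{a, b, c} = {1::nat, 2, 3}" shows "(a,b,c) \<in> set perms"
proof -
  have "a \<in> {1,2,3}" "b \<in> {1,2,3}" "c \<in> {1,2,3}" using assms(2) by blast+
  then show ?thesis using assms(1) by (auto simp: perms_def)
qed

lemma prod_add: "(\<Prod>i<a+b. f i) = (\<Prod>i<a. f i) * (\<Prod>i<b. f (i+a))" for f :: "nat \<Rightarrow> int"
  by (induction b) (simp_all add: ac_simps)

lemma periodic: fixes m :: nat assumes "\<And>j. G (j+k) = (G j :: int)" shows "(\<Prod>i<k. G (i+m)) = (\<Prod>i<k. G i)"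
proof (induction m)
  case 0 then show ?case by simp
next
  case (Suc m)
  show ?case
  proof (cases k)
    case 0 then show ?thesis by simp
  next
    case (Suc k')
    have "(\<Prod>i<k. G (i + Suc m)) = (\<Prod>i<k'. G (Suc i + m)) * G (k' + Suc m)"
      using Suc by (simp add: prod.lessThan_Suc)
    also have "G (k' + Suc m) = G m" using assms[of m] Suc by (simp add: ac_simps)
    also have "(\<Prod>i<k'. G (Suc i + m)) * G m = (\<Prod>i<k. G (i + m))"
      unfolding Suc prod.lessThan_Suc_shift by (simp add: ac_simps)
    finally show ?thesis using Suc.IH by simp
  qed
qed

theorem lemma10:
  fixes k :: nat and \<gamma> :: "gpv set \<Rightarrow> nat" and a b c :: nat
  assumes "k \<ge> 1"
    and "proper_colouring k \<gamma>"
    and "distinct [a, b, c]" and "{a, b, c} = {1, 2, 3}"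
    and "gam k \<gamma> 1 \<in> T_verts a b c \<union> H_verts a b c"
  shows "gp_sign k \<gamma> = (\<Prod>i = 1..k. arc_sign a b c (gam k \<gamma> i) (gam k \<gamma> (i + 1)))"
proof -
  note k = assms(1) and pc = assms(2)
  have abc: "(a,b,c) \<in> set perms" using perms_of assms(3,4) .
  define F where "F i = sign_u k \<gamma> i * sign_v k \<gamma> i" for i
  define G where "G j = F (j mod (3*k)) * F ((j+k) mod (3*k)) * F ((j+2*k) mod (3*k))" for j
  have sl: "gam k \<gamma> (j-1) \<in> T_verts a b c \<union> H_verts a b c \<Longrightarrow> j \<ge> 1 \<Longrightarrow>
     G j = arc_sign a b c (gam k \<gamma> (j-1)) (gam k \<gamma> j) \<and> gam k \<gamma> j \<in> T_verts a b c \<union> H_verts a b c" for j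
    unfolding G_def F_def using slice[OF k pc abc] by (simp add: ac_simps)
  have inv: "i \<ge> 1 \<Longrightarrow> gam k \<gamma> i \<in> T_verts a b c \<union> H_verts a b c" for i
  proof (induction i)
    case 0 then show ?case by simp
  next
    case (Suc i)
    show ?case
    proof (cases "i = 0")
      case True then show ?thesis using assms(5) by simp
    next
      case False
      then show ?thesis using Suc.IH sl[of "Suc i"] by simp
    qed
  qed
  have per: "G (j+k) = G j" for j
  proof -
    have e: "j + k + k = j + 2*k" "j + k + 2*k = j + 3*k" by simp_all
    show ?thesis unfolding G_def e mod_add_self2 by (simp add: ac_simps)
  qed
  have "gp_sign k \<gamma> = (\<Prod>i<k+k+k. F i)"
    unfolding gp_sign_def F_def by (simp add: mult.commute[of 3 k] numeral_3_eq_3 ac_simps)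
  also have "\<dots> = (\<Prod>i<k. F i) * (\<Prod>i<k. F (i+k)) * (\<Prod>i<k. F (i+(k+k)))"
    by (simp only: prod_add)
  also have "\<dots> = (\<Prod>i<k. G i)"
  proof -
    have "G i = F i * F (i+k) * F (i+(k+k))" if "i < k" for i
    proof -
      have "i < 3*k" "i + k < 3*k" "i + 2*k < 3*k" using that by simp_all
      then show ?thesis unfolding G_def by (simp add: mult_2)
    qed
    then have "(\<Prod>i<k. G i) = (\<Prod>i<k. F i * F (i+k) * F (i+(k+k)))" by (intro prod.cong) auto
    then show ?thesis by (simp add: prod.distrib)
  qed
  also have "\<dots> = (\<Prod>i<k. G (i+2))" using periodic[of G k 2] per by simp
  also have "\<dots> = (\<Prod>i<k. arc_sign a b c (gam k \<gamma> (Suc i)) (gam k \<gamma> (Suc i + 1)))"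
  proof (intro prod.cong refl)
    fix i assume "i \<in> {..<k}"
    have "gam k \<gamma> (Suc i) \<in> T_verts a b c \<union> H_verts a b c" using inv[of "Suc i"] by simp
    then show "G (i+2) = arc_sign a b c (gam k \<gamma> (Suc i)) (gam k \<gamma> (Suc i + 1))"
      using sl[of "i+2"] by simp
  qed
  also have "\<dots> = (\<Prod>i = 1..k. arc_sign a b c (gam k \<gamma> i) (gam k \<gamma> (i + 1)))"
    using prod.atLeast1_atMost_eq[of "\<lambda>i. arc_sign a b c (gam k \<gamma> i) (gam k \<gamma> (i + 1))" k] by simp
  finally show ?thesis .
qed

end
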